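(* Let $(A,\mu,\Delta,\alpha)$ be an infinitesimal Hom-bialgebra and define $x\bullet y=\alpha(y_1)(\alpha(x)y_2)$ (which equals $(y_1\alpha(x))\alpha(y_2)$) for $x,y\in A$. Then $(A,\bullet,\alpha^3)$ is a left Hom-pre-Lie algebra.
   Context: Notation $\mu(a\otimes b)=ab$, $\Delta(a)=a_1\otimes a_2$. An infinitesimal Hom-bialgebra $(A,\mu,\Delta,\alpha)$: $\alpha$ linear with $\alpha(xy)=\alpha(x)\alpha(y)$ and $\alpha(x)(yz)=(xy)\alpha(z)$; $(\alpha\otimes\alpha)\circ\Delta=\Delta\circ\alpha$ and $(\Delta\otimes\alpha)\circ\Delta=(\alpha\otimes\Delta)\circ\Delta$; and $\Delta(ab)=\alpha(a)b_1\otimes\alpha(b_2)+\alpha(a_1)\otimes a_2\alpha(b)$ for all $a,b$. A left Hom-pre-Lie algebra $(A,\cdot,\gamma)$: $\gamma(x\cdot y)=\gamma(x)\cdot\gamma(y)$ and $\gamma(x)\cdot(y\cdot z)-(x\cdot y)\cdot\gamma(z)=\gamma(y)\cdot(x\cdot z)-(y\cdot x)\cdot\gamma(z)$ for all $x,y,z$. *)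

theory Defs
  imports Complex_Main
begin

text \<open>Tensors in A (x) A (resp. A (x) A (x) A) are represented as finite sums of simple tensors,
  i.e. lists of pairs (resp. triples).  Two such tensors are equal iff they agree under every
  bilinear (resp. trilinear) form into the ground field (universal property of the tensor
  product; over a field, scalar-valued multilinear forms separate tensors).\<close>

definition bilinear_form :: "('k::field \<Rightarrow> 'a::ab_group_add \<Rightarrow> 'a) \<Rightarrow> ('a \<Rightarrow> 'a \<Rightarrow> 'k) \<Rightarrow> bool" where
  "bilinear_form sc B \<longleftrightarrow>
     (\<forall>x. Vector_Spaces.linear sc (*) (B x)) \<and> (\<forall>y. Vector_Spaces.linear sc (*) (\<lambda>x. B x y))"

definition trilinear_form :: "('k::field \<Rightarrow> 'a::ab_group_add \<Rightarrow> 'a) \<Rightarrow> ('a \<Rightarrow> 'a \<Rightarrow> 'a \<Rightarrow> 'k) \<Rightarrow> bool" where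
  "trilinear_form sc T \<longleftrightarrow>
     (\<forall>y z. Vector_Spaces.linear sc (*) (\<lambda>x. T x y z)) \<and>
     (\<forall>x z. Vector_Spaces.linear sc (*) (\<lambda>y. T x y z)) \<and>
     (\<forall>x y. Vector_Spaces.linear sc (*) (\<lambda>z. T x y z))"

definition tensor2_eq :: "('k::field \<Rightarrow> 'a::ab_group_add \<Rightarrow> 'a) \<Rightarrow> ('a \<times> 'a) list \<Rightarrow> ('a \<times> 'a) list \<Rightarrow> bool" where
  "tensor2_eq sc s t \<longleftrightarrow> (\<forall>B. bilinear_form sc B \<longrightarrow>
     sum_list (map (\<lambda>(x, y). B x y) s) = sum_list (map (\<lambda>(x, y). B x y) t))"

definition tensor3_eq :: "('k::field \<Rightarrow> 'a::ab_group_add \<Rightarrow> 'a) \<Rightarrow> ('a \<times> 'a \<times> 'a) list \<Rightarrow> ('a \<times> 'a \<times> 'a) list \<Rightarrow> bool" where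
  "tensor3_eq sc s t \<longleftrightarrow> (\<forall>T. trilinear_form sc T \<longrightarrow>
     sum_list (map (\<lambda>(x, y, z). T x y z) s) = sum_list (map (\<lambda>(x, y, z). T x y z) t))"

definition coprod_linear :: "('k::field \<Rightarrow> 'a::ab_group_add \<Rightarrow> 'a) \<Rightarrow> ('a \<Rightarrow> ('a \<times> 'a) list) \<Rightarrow> bool" where
  "coprod_linear sc D \<longleftrightarrow> (\<forall>c a b.
     tensor2_eq sc (D (sc c a + b)) (map (\<lambda>(x, y). (sc c x, y)) (D a) @ D b))"

definition infinitesimal_hom_bialgebra ::
  "('k::field \<Rightarrow> 'a::ab_group_add \<Rightarrow> 'a) \<Rightarrow> ('a \<Rightarrow> 'a \<Rightarrow> 'a) \<Rightarrow> ('a \<Rightarrow> ('a \<times> 'a) list) \<Rightarrow> ('a \<Rightarrow> 'a) \<Rightarrow> bool" where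
  "infinitesimal_hom_bialgebra sc mu D \<alpha> \<longleftrightarrow>
     vector_space sc \<and>
     (\<forall>x. Vector_Spaces.linear sc sc (mu x)) \<and> (\<forall>y. Vector_Spaces.linear sc sc (\<lambda>x. mu x y)) \<and>
     Vector_Spaces.linear sc sc \<alpha> \<and>
     coprod_linear sc D \<and>
     (\<forall>x y. \<alpha> (mu x y) = mu (\<alpha> x) (\<alpha> y)) \<and>
     (\<forall>x y z. mu (\<alpha> x) (mu y z) = mu (mu x y) (\<alpha> z)) \<and>
     (\<forall>a. tensor2_eq sc (map (\<lambda>(x, y). (\<alpha> x, \<alpha> y)) (D a)) (D (\<alpha> a))) \<and>
     (\<forall>a. tensor3_eq sc
        (concat (map (\<lambda>(x, y). map (\<lambda>(u, v). (u, v, \<alpha> y)) (D x)) (D a)))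
        (concat (map (\<lambda>(x, y). map (\<lambda>(u, v). (\<alpha> x, u, v)) (D y)) (D a)))) \<and>
     (\<forall>a b. tensor2_eq sc (D (mu a b))
        (map (\<lambda>(x, y). (mu (\<alpha> a) x, \<alpha> y)) (D b) @ map (\<lambda>(x, y). (\<alpha> x, mu y (\<alpha> b))) (D a)))"

definition left_hom_pre_lie :: "('a::ab_group_add \<Rightarrow> 'a \<Rightarrow> 'a) \<Rightarrow> ('a \<Rightarrow> 'a) \<Rightarrow> bool" where
  "left_hom_pre_lie m \<gamma> \<longleftrightarrow>
     (\<forall>x y. \<gamma> (m x y) = m (\<gamma> x) (\<gamma> y)) \<and>
     (\<forall>x y z. m (\<gamma> x) (m y z) - m (m x y) (\<gamma> z) = m (\<gamma> y) (m x z) - m (m y x) (\<gamma> z))"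

text \<open>x \<bullet> y = \<alpha>(y_1) (\<alpha>(x) y_2), computed on the chosen representative of Delta y.\<close>
definition hbullet :: "('a::ab_group_add \<Rightarrow> 'a \<Rightarrow> 'a) \<Rightarrow> ('a \<Rightarrow> ('a \<times> 'a) list) \<Rightarrow> ('a \<Rightarrow> 'a) \<Rightarrow> 'a \<Rightarrow> 'a \<Rightarrow> 'a" where
  "hbullet mu D \<alpha> x y = sum_list (map (\<lambda>(y1, y2). mu (\<alpha> y1) (mu (\<alpha> x) y2)) (D y))"

end

theory Submission
  imports Defs
begin


lemma vs_field: "vector_space ((*) :: 'k::field \<Rightarrow> 'k \<Rightarrow> 'k)"
  by (unfold_locales) (auto simp: algebra_simps)

definition S2 :: "('a \<Rightarrow> 'a \<Rightarrow> 'k::ab_group_add) \<Rightarrow> ('a \<times> 'a) list \<Rightarrow> 'k" where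
  "S2 B t = sum_list (map (\<lambda>(x, y). B x y) t)"

lemma S2_simps[simp]: "S2 B [] = 0" "S2 B ((x,y) # t) = B x y + S2 B t"
  "S2 B (s @ t) = S2 B s + S2 B t"
  by (auto simp: S2_def)

lemma S2_map[simp]: "S2 B (map (\<lambda>(x, y). (f x, g y)) t) = S2 (\<lambda>x y. B (f x) (g y)) t"
  by (induction t) auto

lemma S3_concat: "sum_list (map (\<lambda>(x, y, z). T x y z) (concat (map (\<lambda>(x, y). map (\<lambda>(u, v). (u, v, g y)) (D x)) l)))
   = sum_list (map (\<lambda>(x, y). S2 (\<lambda>u v. T u v (g y)) (D x)) l)"
proof (induction l)
  case (Cons a l)
  have "\<And>t. sum_list (map (\<lambda>(x, y, z). T x y z) (map (\<lambda>(u, v). (u, v, c)) t)) = S2 (\<lambda>u v. T u v c) t" for c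
    by (induct_tac t) auto
  then show ?case using Cons by (cases a) auto
qed simp

lemma S3_concat': "sum_list (map (\<lambda>(x, y, z). T x y z) (concat (map (\<lambda>(x, y). map (\<lambda>(u, v). (g x, u, v)) (D y)) l)))
   = sum_list (map (\<lambda>(x, y). S2 (\<lambda>u v. T (g x) u v) (D y)) l)"
proof (induction l)
  case (Cons a l)
  have "\<And>t. sum_list (map (\<lambda>(x, y, z). T x y z) (map (\<lambda>(u, v). (c, u, v)) t)) = S2 (\<lambda>u v. T c u v) t" for c
    by (induct_tac t) auto
  then show ?case using Cons by (cases a) auto
qed simp

lemma add_of_lin: "Vector_Spaces.linear s1 s2 f \<Longrightarrow> f (a + b) = f a + f b"
  by (simp add: Vector_Spaces.linear_iff)
lemma sc_of_lin: "Vector_Spaces.linear s1 s2 f \<Longrightarrow> f (s1 c a) = s2 c (f a)"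
  by (simp add: Vector_Spaces.linear_iff)
lemma zero_of_add: "(\<And>a b. f (a + b) = f a + f b) \<Longrightarrow> f 0 = 0"
  for f :: "'x::monoid_add \<Rightarrow> 'b::ab_group_add"
proof -
  assume h: "\<And>a b. f (a + b) = f a + f b"
  have "f 0 + f 0 = f 0 + 0" using h[of 0 0] by simp
  then show ?thesis by (rule add_left_imp_eq)
qed
lemma diff_of_add: "(\<And>a b. f (a + b) = f a + f b) \<Longrightarrow> f (a - b) = f a - f b"
  for f :: "'x::ab_group_add \<Rightarrow> 'b::ab_group_add"
proof -
  assume h: "\<And>a b. f (a + b) = f a + f b"
  have "f (a - b) + f b = f a" using h[of "a - b" b] by simp
  then show ?thesis by (simp add: eq_diff_eq)
qed
lemma sum_of_add: "(\<And>a b. f (a + b) = f a + f b) \<Longrightarrow> f (sum_list xs) = sum_list (map f xs) " for f :: "'x::ab_group_add \<Rightarrow> 'y::ab_group_add"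
proof -
  assume h: "\<And>a b. f (a + b) = f a + f b"
  have z: "f 0 = 0" by (rule zero_of_add[OF h])
  show ?thesis by (induction xs) (simp_all add: z h)
qed

locale ihb =
  fixes sc :: "'k::field \<Rightarrow> 'a::ab_group_add \<Rightarrow> 'a"
    and mu :: "'a \<Rightarrow> 'a \<Rightarrow> 'a"
    and D :: "'a \<Rightarrow> ('a \<times> 'a) list"
    and \<alpha> :: "'a \<Rightarrow> 'a"
  assumes H: "infinitesimal_hom_bialgebra sc mu D \<alpha>"
begin

lemma vs: "vector_space sc" using H by (simp add: infinitesimal_hom_bialgebra_def)

lemma mu_addL[simp]: "mu (a + b) c = mu a c + mu b c"
  using H by (auto simp: infinitesimal_hom_bialgebra_def intro: add_of_lin[where f="\<lambda>x. mu x c"])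
lemma mu_addR[simp]: "mu c (a + b) = mu c a + mu c b"
  using H by (auto simp: infinitesimal_hom_bialgebra_def intro: add_of_lin)
lemma mu_scL[simp]: "mu (sc k a) c = sc k (mu a c)"
  using H by (auto simp: infinitesimal_hom_bialgebra_def intro: sc_of_lin[where f="\<lambda>x. mu x c"])
lemma mu_scR[simp]: "mu c (sc k a) = sc k (mu c a)"
  using H by (auto simp: infinitesimal_hom_bialgebra_def intro: sc_of_lin)
lemma al_add[simp]: "\<alpha> (a + b) = \<alpha> a + \<alpha> b"
  using H by (auto simp: infinitesimal_hom_bialgebra_def intro: add_of_lin)
lemma al_sc[simp]: "\<alpha> (sc k a) = sc k (\<alpha> a)"
  using H by (auto simp: infinitesimal_hom_bialgebra_def intro: sc_of_lin)
lemma al_mu[simp]: "\<alpha> (mu x y) = mu (\<alpha> x) (\<alpha> y)"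
  using H by (auto simp: infinitesimal_hom_bialgebra_def)
lemma hassoc: "mu (\<alpha> x) (mu y z) = mu (mu x y) (\<alpha> z)"
  using H by (auto simp: infinitesimal_hom_bialgebra_def)

lemma mu_sumL: "mu (sum_list xs) c = sum_list (map (\<lambda>x. mu x c) xs)"
  by (rule sum_of_add[where f="\<lambda>x. mu x c"]) simp
lemma mu_sumR: "mu c (sum_list xs) = sum_list (map (\<lambda>x. mu c x) xs)"
  by (rule sum_of_add[where f="\<lambda>x. mu c x"]) simp
lemma al_sum: "\<alpha> (sum_list xs) = sum_list (map \<alpha> xs)"
  by (rule sum_of_add) simp

lemma lfI:
  assumes "\<And>a b. f (a + b) = f a + f b" "\<And>c a. f (sc c a) = c * f a"
  shows "Vector_Spaces.linear sc (*) f"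
  using assms vs vs_field by (simp add: Vector_Spaces.linear_iff)

lemma bilinI:
  assumes "\<And>a b y. B (a + b) y = B a y + B b y" "\<And>c a y. B (sc c a) y = c * B a y"
     "\<And>a b y. B y (a + b) = B y a + B y b" "\<And>c a y. B y (sc c a) = c * B y a"
  shows "bilinear_form sc B"
  unfolding bilinear_form_def using assms by (auto intro!: lfI)

lemma trilinI:
  assumes "\<And>a b y z. T (a + b) y z = T a y z + T b y z" "\<And>c a y z. T (sc c a) y z = c * T a y z"
     "\<And>a b y z. T y (a + b) z = T y a z + T y b z" "\<And>c a y z. T y (sc c a) z = c * T y a z"
     "\<And>a b y z. T y z (a + b) = T y z a + T y z b" "\<And>c a y z. T y z (sc c a) = c * T y z a"
  shows "trilinear_form sc T"
  unfolding trilinear_form_def using assms by (auto intro!: lfI)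

lemma bil:
  assumes "bilinear_form sc B"
  shows "B (a + b) y = B a y + B b y" "B (sc c a) y = c * B a y"
     "B y (a + b) = B y a + B y b" "B y (sc c a) = c * B y a"
  using assms by (auto simp: bilinear_form_def Vector_Spaces.linear_iff)

lemma S2_eq: "tensor2_eq sc s t \<Longrightarrow> bilinear_form sc B \<Longrightarrow> S2 B s = S2 B t"
  unfolding tensor2_eq_def S2_def by blast

lemma SD_lin:
  assumes B: "bilinear_form sc B"
  shows "S2 B (D (a + b)) = S2 B (D a) + S2 B (D b)"
proof -
  have "coprod_linear sc D" using H by (simp add: infinitesimal_hom_bialgebra_def)
  then have "tensor2_eq sc (D (sc 1 a + b)) (map (\<lambda>(x, y). (sc 1 x, y)) (D a) @ D b)"
    unfolding coprod_linear_def by blast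
  from S2_eq[OF this B] show ?thesis
    using vector_space.vector_space_assms(4)[OF vs] by simp
qed

lemma SD_zero: "bilinear_form sc B \<Longrightarrow> S2 B (D 0) = 0"
proof -
  assume B: "bilinear_form sc B"
  have "S2 B (D 0) = S2 B (D 0) + S2 B (D 0)" using SD_lin[OF B, of 0 0] by (simp only: add_0)
  then show ?thesis by (metis add_cancel_right_right)
qed

lemma SD_sum: "bilinear_form sc B \<Longrightarrow> S2 B (D (sum_list xs)) = sum_list (map (\<lambda>e. S2 B (D e)) xs)"
  by (induction xs) (auto simp: SD_zero SD_lin)

lemma SD_al:
  assumes B: "bilinear_form sc B"
  shows "S2 B (D (\<alpha> a)) = S2 (\<lambda>u v. B (\<alpha> u) (\<alpha> v)) (D a)"
proof -
  have "tensor2_eq sc (map (\<lambda>(x, y). (\<alpha> x, \<alpha> y)) (D a)) (D (\<alpha> a))"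
    using H by (simp add: infinitesimal_hom_bialgebra_def)
  from S2_eq[OF this B] show ?thesis by simp
qed

lemma SD_mu:
  assumes B: "bilinear_form sc B"
  shows "S2 B (D (mu a b)) = S2 (\<lambda>u v. B (mu (\<alpha> a) u) (\<alpha> v)) (D b) + S2 (\<lambda>u v. B (\<alpha> u) (mu v (\<alpha> b))) (D a)"
proof -
  have "tensor2_eq sc (D (mu a b))
        (map (\<lambda>(x, y). (mu (\<alpha> a) x, \<alpha> y)) (D b) @ map (\<lambda>(x, y). (\<alpha> x, mu y (\<alpha> b))) (D a))"
    using H by (simp add: infinitesimal_hom_bialgebra_def)
  from S2_eq[OF this B] show ?thesis by simp
qed

lemma coassoc:
  assumes T: "trilinear_form sc T"
  shows "sum_list (map (\<lambda>(a1, a2). S2 (\<lambda>u v. T u v (\<alpha> a2)) (D a1)) (D a))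
       = sum_list (map (\<lambda>(a1, a2). S2 (\<lambda>u v. T (\<alpha> a1) u v) (D a2)) (D a))"
proof -
  have "tensor3_eq sc
        (concat (map (\<lambda>(x, y). map (\<lambda>(u, v). (u, v, \<alpha> y)) (D x)) (D a)))
        (concat (map (\<lambda>(x, y). map (\<lambda>(u, v). (\<alpha> x, u, v)) (D y)) (D a)))"
    using H by (simp add: infinitesimal_hom_bialgebra_def)
  then show ?thesis using T unfolding tensor3_eq_def S3_concat S3_concat' by blast
qed

end

context ihb begin

lemma phi_sum: "Vector_Spaces.linear sc (*) \<phi> \<Longrightarrow> \<phi> (sum_list xs) = sum_list (map \<phi> xs)"
  by (rule sum_of_add) (simp add: add_of_lin)

lemma bil_mu1: "bilinear_form sc B \<Longrightarrow> bilinear_form sc (\<lambda>u v. B (mu a u) (\<alpha> v))"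
  by (rule bilinI) (simp_all add: bil)
lemma bil_mu2: "bilinear_form sc B \<Longrightarrow> bilinear_form sc (\<lambda>u v. B (\<alpha> u) (mu v b))"
  by (rule bilinI) (simp_all add: bil)
lemma bil_al: "bilinear_form sc B \<Longrightarrow> bilinear_form sc (\<lambda>u v. B (\<alpha> u) (\<alpha> v))"
  by (rule bilinI) (simp_all add: bil)

lemma bil_hb: "Vector_Spaces.linear sc (*) \<phi> \<Longrightarrow> bilinear_form sc (\<lambda>u v. \<phi> (mu (\<alpha> u) (mu c v)))"
  by (rule bilinI) (simp_all add: add_of_lin sc_of_lin)

lemma phi_hb: "Vector_Spaces.linear sc (*) \<phi> \<Longrightarrow>
   \<phi> (hbullet mu D \<alpha> a w) = S2 (\<lambda>u v. \<phi> (mu (\<alpha> u) (mu (\<alpha> a) v))) (D w)"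
  by (simp add: hbullet_def S2_def phi_sum o_def case_prod_unfold)

lemma E1: "mu (mu (\<alpha>(\<alpha>(\<alpha> p))) (mu (\<alpha>(\<alpha>(\<alpha> y))) (\<alpha> q))) (mu (\<alpha>(\<alpha>(\<alpha>(\<alpha> x)))) (\<alpha>(\<alpha> r)))
   = mu (\<alpha>(\<alpha>(\<alpha>(\<alpha> p)))) (mu (\<alpha>(\<alpha>(\<alpha>(\<alpha> y)))) (mu (\<alpha> q) (mu (\<alpha>(\<alpha> x)) r)))"
  using hassoc[of "\<alpha>(\<alpha>(\<alpha> p))" "mu (\<alpha>(\<alpha>(\<alpha> y))) (\<alpha> q)" "mu (\<alpha>(\<alpha>(\<alpha> x))) (\<alpha> r)"]
    hassoc[of "\<alpha>(\<alpha>(\<alpha> y))" "\<alpha> q" "mu (\<alpha>(\<alpha> x)) r"] by simp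

lemma E2: "mu (mu (\<alpha>(\<alpha>(\<alpha> a))) (\<alpha>(\<alpha>(\<alpha> b)))) (mu (\<alpha>(\<alpha>(\<alpha>(\<alpha> c)))) (mu (\<alpha>(\<alpha> d)) (\<alpha>(\<alpha> e))))
   = mu (\<alpha>(\<alpha>(\<alpha>(\<alpha> a)))) (mu (mu (\<alpha>(\<alpha> b)) (mu (\<alpha>(\<alpha> c)) (\<alpha> d))) (\<alpha>(\<alpha>(\<alpha> e))))"
proof -
  have "mu (mu (\<alpha>(\<alpha>(\<alpha> a))) (\<alpha>(\<alpha>(\<alpha> b)))) (mu (\<alpha>(\<alpha>(\<alpha>(\<alpha> c)))) (mu (\<alpha>(\<alpha> d)) (\<alpha>(\<alpha> e))))
     = mu (mu (\<alpha>(\<alpha>(\<alpha> a))) (\<alpha>(\<alpha>(\<alpha> b)))) (\<alpha> (mu (\<alpha>(\<alpha>(\<alpha> c))) (mu (\<alpha> d) (\<alpha> e))))"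
    by simp
  also have "\<dots> = mu (\<alpha>(\<alpha>(\<alpha>(\<alpha> a)))) (mu (\<alpha>(\<alpha>(\<alpha> b))) (mu (\<alpha>(\<alpha>(\<alpha> c))) (mu (\<alpha> d) (\<alpha> e))))"
    by (rule hassoc[symmetric])
  also have "mu (\<alpha>(\<alpha>(\<alpha> c))) (mu (\<alpha> d) (\<alpha> e)) = mu (mu (\<alpha>(\<alpha> c)) (\<alpha> d)) (\<alpha>(\<alpha> e))"
    by (rule hassoc)
  also have "mu (\<alpha>(\<alpha>(\<alpha> b))) (mu (mu (\<alpha>(\<alpha> c)) (\<alpha> d)) (\<alpha>(\<alpha> e))) = mu (mu (\<alpha>(\<alpha> b)) (mu (\<alpha>(\<alpha> c)) (\<alpha> d))) (\<alpha>(\<alpha>(\<alpha> e)))"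
    by (rule hassoc)
  finally show ?thesis .
qed

end

context ihb begin
definition TA :: "('a \<Rightarrow> 'k) \<Rightarrow> 'a \<Rightarrow> 'a \<Rightarrow> 'a \<Rightarrow> 'a \<Rightarrow> 'a \<Rightarrow> 'k" where
  "TA \<phi> x y P Q R = \<phi> (mu (\<alpha>(\<alpha>(\<alpha> P))) (mu (\<alpha>(\<alpha>(\<alpha>(\<alpha> x)))) (mu (\<alpha> Q) (mu (\<alpha>(\<alpha> y)) R))))"

lemma tri_TA: "Vector_Spaces.linear sc (*) \<phi> \<Longrightarrow> trilinear_form sc (TA \<phi> x y)"
  by (rule trilinI) (simp_all add: TA_def add_of_lin sc_of_lin)

lemma T1_expand:
  assumes lf: "Vector_Spaces.linear sc (*) \<phi>"
  shows "\<phi> (hbullet mu D \<alpha> (\<alpha>(\<alpha>(\<alpha> x))) (hbullet mu D \<alpha> y z))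
       = \<phi> (hbullet mu D \<alpha> (hbullet mu D \<alpha> x y) (\<alpha>(\<alpha>(\<alpha> z))))
         + sum_list (map (\<lambda>(z1, z2). S2 (\<lambda>u v. TA \<phi> x y u v (\<alpha> z2)) (D z1)) (D z))
         + sum_list (map (\<lambda>(z1, z2). S2 (\<lambda>u v. TA \<phi> y x u v (\<alpha> z2)) (D z1)) (D z))"
proof -
  define B where "B = (\<lambda>u v. \<phi> (mu (\<alpha> u) (mu (\<alpha>(\<alpha>(\<alpha>(\<alpha> x)))) v)))"
  have bB: "bilinear_form sc B" unfolding B_def by (rule bil_hb[OF lf])
  define G where "G = (\<lambda>z1 z2 u v. \<phi> (mu (\<alpha>(\<alpha>(\<alpha>(\<alpha> z1)))) (mu (mu (\<alpha>(\<alpha> u)) (mu (\<alpha>(\<alpha> x)) (\<alpha> v))) (\<alpha>(\<alpha>(\<alpha> z2))))))"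
  have s1: "\<phi> (hbullet mu D \<alpha> (\<alpha>(\<alpha>(\<alpha> x))) (hbullet mu D \<alpha> y z))
     = sum_list (map (\<lambda>(z1, z2). S2 B (D (mu (\<alpha> z1) (mu (\<alpha> y) z2)))) (D z))"
    unfolding phi_hb[OF lf] B_def[symmetric]
    by (simp add: hbullet_def SD_sum[OF bB] o_def case_prod_unfold)
  have inner: "S2 B (D (mu (\<alpha> z1) (mu (\<alpha> y) z2)))
      = S2 (\<lambda>u v. TA \<phi> y x (\<alpha> z1) u v) (D z2) + S2 (G z1 z2) (D y) + S2 (\<lambda>u v. TA \<phi> x y u v (\<alpha> z2)) (D z1)"
    for z1 z2
    unfolding SD_mu[OF bB] SD_mu[OF bil_mu1[OF bB]] SD_al[OF bil_mu2[OF bil_mu1[OF bB]]]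
      SD_al[OF bil_mu2[OF bB]]
    by (simp add: B_def G_def TA_def E1 E2 add_ac)
  have s2: "\<phi> (hbullet mu D \<alpha> (hbullet mu D \<alpha> x y) (\<alpha>(\<alpha>(\<alpha> z))))
      = sum_list (map (\<lambda>(z1, z2). S2 (G z1 z2) (D y)) (D z))"
    unfolding phi_hb[OF lf] SD_al[OF bil_al[OF bil_al[OF bil_hb[OF lf]]]] SD_al[OF bil_al[OF bil_hb[OF lf]]]
      SD_al[OF bil_hb[OF lf]]
    by (simp add: hbullet_def G_def S2_def al_sum mu_sumL mu_sumR phi_sum[OF lf] o_def case_prod_unfold)
  have s3: "sum_list (map (\<lambda>(z1, z2). S2 (\<lambda>u v. TA \<phi> y x (\<alpha> z1) u v) (D z2)) (D z))
      = sum_list (map (\<lambda>(z1, z2). S2 (\<lambda>u v. TA \<phi> y x u v (\<alpha> z2)) (D z1)) (D z))"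
    using coassoc[OF tri_TA[OF lf], of y x z] by simp
  show ?thesis
    unfolding s1 inner s2 s3[symmetric]
    by (simp add: sum_list_addf case_prod_unfold add_ac)
qed

end

lemma separate:
  fixes sc :: "'k::field \<Rightarrow> 'a::ab_group_add \<Rightarrow> 'a"
  assumes vs: "vector_space sc"
    and h: "\<And>\<phi>. Vector_Spaces.linear sc (*) \<phi> \<Longrightarrow> \<phi> p = \<phi> q"
  shows "p = q"
proof (rule ccontr)
  assume ne: "p \<noteq> q"
  interpret vp: vector_space_pair sc "(*) :: 'k \<Rightarrow> 'k \<Rightarrow> 'k"
    using vs vs_field by (simp add: vector_space_pair_def)
  have "vp.vs1.independent {p - q}"
    using ne by (simp add: vp.vs1.independent_insert vp.vs1.span_empty)
  then obtain g where g: "Vector_Spaces.linear sc (*) g" "g (p - q) = (1::'k)"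
    using vp.linear_independent_extend[of "{p-q}" "\<lambda>_. 1"] by auto
  have "g p = g q" using h[OF g(1)] .
  moreover have "g (p - q) = g p - g q"
    by (rule diff_of_add) (rule add_of_lin[OF g(1)])
  ultimately show False using g(2) by simp
qed
context ihb begin

lemma mult_part: "\<alpha>(\<alpha>(\<alpha> (hbullet mu D \<alpha> x y))) = hbullet mu D \<alpha> (\<alpha>(\<alpha>(\<alpha> x))) (\<alpha>(\<alpha>(\<alpha> y)))"
proof (rule separate[OF vs])
  fix \<phi> assume lf: "Vector_Spaces.linear sc (*) \<phi>"
  show "\<phi> (\<alpha>(\<alpha>(\<alpha> (hbullet mu D \<alpha> x y)))) = \<phi> (hbullet mu D \<alpha> (\<alpha>(\<alpha>(\<alpha> x))) (\<alpha>(\<alpha>(\<alpha> y))))"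
    unfolding phi_hb[OF lf] SD_al[OF bil_al[OF bil_al[OF bil_hb[OF lf]]]] SD_al[OF bil_al[OF bil_hb[OF lf]]]
      SD_al[OF bil_hb[OF lf]]
    by (simp add: hbullet_def S2_def al_sum phi_sum[OF lf] o_def case_prod_unfold)
qed

lemma prelie_part:
  "hbullet mu D \<alpha> (\<alpha>(\<alpha>(\<alpha> x))) (hbullet mu D \<alpha> y z) - hbullet mu D \<alpha> (hbullet mu D \<alpha> x y) (\<alpha>(\<alpha>(\<alpha> z)))
 = hbullet mu D \<alpha> (\<alpha>(\<alpha>(\<alpha> y))) (hbullet mu D \<alpha> x z) - hbullet mu D \<alpha> (hbullet mu D \<alpha> y x) (\<alpha>(\<alpha>(\<alpha> z)))"
proof (rule separate[OF vs])
  fix \<phi> assume lf: "Vector_Spaces.linear sc (*) \<phi>"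
  have d: "\<phi> (a - b) = \<phi> a - \<phi> b" for a b
    by (rule diff_of_add) (rule add_of_lin[OF lf])
  show "\<phi> (hbullet mu D \<alpha> (\<alpha>(\<alpha>(\<alpha> x))) (hbullet mu D \<alpha> y z) - hbullet mu D \<alpha> (hbullet mu D \<alpha> x y) (\<alpha>(\<alpha>(\<alpha> z))))
    = \<phi> (hbullet mu D \<alpha> (\<alpha>(\<alpha>(\<alpha> y))) (hbullet mu D \<alpha> x z) - hbullet mu D \<alpha> (hbullet mu D \<alpha> y x) (\<alpha>(\<alpha>(\<alpha> z))))"
    unfolding d T1_expand[OF lf, of x y z] T1_expand[OF lf, of y x z] by (simp add: algebra_simps)
qed

end

theorem mainTheorem13:
  fixes sc :: "'k::field \<Rightarrow> 'a::ab_group_add \<Rightarrow> 'a"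
    and mu :: "'a \<Rightarrow> 'a \<Rightarrow> 'a"
    and D :: "'a \<Rightarrow> ('a \<times> 'a) list"
    and \<alpha> :: "'a \<Rightarrow> 'a"
  assumes "infinitesimal_hom_bialgebra sc mu D \<alpha>"
  shows "left_hom_pre_lie (hbullet mu D \<alpha>) (\<alpha> \<circ> \<alpha> \<circ> \<alpha>)"
proof -
  interpret ihb sc mu D \<alpha> by (rule ihb.intro) (rule assms)
  show ?thesis unfolding left_hom_pre_lie_def o_def
    using mult_part prelie_part by blast
qed
end
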